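(* Let $u$ be an endomorphism of a vector space $V$ of countably infinite dimension over a field $\mathbb{F}$. Assume that $u$ has no dominant eigenvalue and that $(u-\lambda\,\mathrm{id}_V)^2=0$ for some $\lambda\in\mathbb{F}$. Then $V^u$ has a good stratification.
   Context: A scalar $\mu$ is a dominant eigenvalue of $u$ if $\operatorname{rk}(u-\mu\,\mathrm{id}_V)<\dim V$. $V^u$ is the $\mathbb{F}[t]$-module with underlying space $V$ and $t\cdot x:=u(x)$. A stratification of a non-zero $\mathbb{F}[t]$-module $M$ is an increasing family $(M_\alpha)_{\alpha\in D}$ of submodules indexed by a well-ordered set $D$ such that each quotient $M_\alpha/\sum_{\beta<\alpha}M_\beta$ is non-zero and monogenous (cyclic), and $M=\sum_{\alpha\in D}M_\alpha$; its dimension sequence is $n_\alpha:=\dim_{\mathbb{F}}(M_\alpha/\sum_{\beta<\alpha}M_\beta)\in\mathbb{N}^*\cup\{+\infty\}$. It is good if (a) $n_\alpha\ge 2$ whenever $\alpha$ is the minimum of $D$ or the successor of some element of $D$, and (b) $D$ has no maximum. *)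

theory Defs
  imports Main HOL.Vector_Spaces "HOL-Library.Countable_Set"
begin

text \<open>Vector spaces are modelled via the library locale vector_space: the space V is the
whole type 'b, with scalar multiplication scale over the field 'a.\<close>

definition is_basis :: "('a::field \<Rightarrow> 'b::ab_group_add \<Rightarrow> 'b) \<Rightarrow> 'b set \<Rightarrow> bool" where
  "is_basis scale B \<longleftrightarrow> \<not> module.dependent scale B \<and> module.span scale B = UNIV"

definition countably_infinite_dim :: "('a::field \<Rightarrow> 'b::ab_group_add \<Rightarrow> 'b) \<Rightarrow> bool" where
  "countably_infinite_dim scale \<longleftrightarrow> (\<exists>B. is_basis scale B \<and> infinite B \<and> countable B)"

text \<open>rk f < dim V, as cardinals: some basis of the range of f is strictly smaller
  in cardinality than some basis of V (all bases of a space are equipotent).\<close>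
definition rank_less_dim :: "('a::field \<Rightarrow> 'b::ab_group_add \<Rightarrow> 'b) \<Rightarrow> ('b \<Rightarrow> 'b) \<Rightarrow> bool" where
  "rank_less_dim scale f \<longleftrightarrow>
     (\<exists>B C. \<not> module.dependent scale B \<and> module.span scale B = range f \<and>
            is_basis scale C \<and> (card_of B, card_of C) \<in> ordLess)"

definition dominant_eigenvalue :: "('a::field \<Rightarrow> 'b::ab_group_add \<Rightarrow> 'b) \<Rightarrow> ('b \<Rightarrow> 'b) \<Rightarrow> 'a \<Rightarrow> bool" where
  "dominant_eigenvalue scale u \<mu> \<longleftrightarrow> rank_less_dim scale (\<lambda>x. u x - scale \<mu> x)"

definition submodule :: "('a::field \<Rightarrow> 'b::ab_group_add \<Rightarrow> 'b) \<Rightarrow> ('b \<Rightarrow> 'b) \<Rightarrow> 'b set \<Rightarrow> bool" where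
  "submodule scale u N \<longleftrightarrow> module.subspace scale N \<and> u ` N \<subseteq> N"

text \<open>Sum of the submodules M beta for beta < alpha (strictly, w.r.t. the well-order r);
  the span of an empty union is the zero submodule.\<close>
definition lower_sum :: "('a::field \<Rightarrow> 'b::ab_group_add \<Rightarrow> 'b) \<Rightarrow> ('i \<times> 'i) set \<Rightarrow> ('i \<Rightarrow> 'b set) \<Rightarrow> 'i \<Rightarrow> 'b set" where
  "lower_sum scale r M \<alpha> = module.span scale (\<Union>\<beta>\<in>{\<beta>. (\<beta>, \<alpha>) \<in> r \<and> \<beta> \<noteq> \<alpha>}. M \<beta>)"

text \<open>M/N is non-zero and monogenous (cyclic as F[t]-module, t acting by u), for submodules N \<subseteq> M.\<close>
definition nonzero_cyclic_quotient :: "('a::field \<Rightarrow> 'b::ab_group_add \<Rightarrow> 'b) \<Rightarrow> ('b \<Rightarrow> 'b) \<Rightarrow> 'b set \<Rightarrow> 'b set \<Rightarrow> bool" where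
  "nonzero_cyclic_quotient scale u M N \<longleftrightarrow>
     \<not> M \<subseteq> N \<and> (\<exists>x\<in>M. M = module.span scale (N \<union> range (\<lambda>k. (u ^^ k) x)))"

text \<open>dim (M/N) \<ge> 2: there are two vectors of M linearly independent modulo N.\<close>
definition quotient_dim_ge2 :: "('a::field \<Rightarrow> 'b::ab_group_add \<Rightarrow> 'b) \<Rightarrow> 'b set \<Rightarrow> 'b set \<Rightarrow> bool" where
  "quotient_dim_ge2 scale M N \<longleftrightarrow>
     (\<exists>x\<in>M. \<exists>y\<in>M. \<forall>a b. scale a x + scale b y \<in> N \<longrightarrow> a = 0 \<and> b = 0)"

definition stratification :: "('a::field \<Rightarrow> 'b::ab_group_add \<Rightarrow> 'b) \<Rightarrow> ('b \<Rightarrow> 'b) \<Rightarrow> ('i \<times> 'i) set \<Rightarrow> ('i \<Rightarrow> 'b set) \<Rightarrow> bool" where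
  "stratification scale u r M \<longleftrightarrow>
     Well_order r \<and> Field r \<noteq> {} \<and>
     (\<forall>\<alpha>\<in>Field r. submodule scale u (M \<alpha>)) \<and>
     (\<forall>\<alpha>\<in>Field r. \<forall>\<beta>\<in>Field r. (\<beta>, \<alpha>) \<in> r \<longrightarrow> M \<beta> \<subseteq> M \<alpha>) \<and>
     (\<forall>\<alpha>\<in>Field r. nonzero_cyclic_quotient scale u (M \<alpha>) (lower_sum scale r M \<alpha>)) \<and>
     module.span scale (\<Union>\<alpha>\<in>Field r. M \<alpha>) = UNIV"

definition is_minimum :: "('i \<times> 'i) set \<Rightarrow> 'i \<Rightarrow> bool" where
  "is_minimum r \<alpha> \<longleftrightarrow> \<alpha> \<in> Field r \<and> (\<forall>\<beta>\<in>Field r. (\<alpha>, \<beta>) \<in> r)"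

definition is_successor_of :: "('i \<times> 'i) set \<Rightarrow> 'i \<Rightarrow> 'i \<Rightarrow> bool" where
  "is_successor_of r \<alpha> \<beta> \<longleftrightarrow> (\<beta>, \<alpha>) \<in> r \<and> \<beta> \<noteq> \<alpha> \<and>
     \<not> (\<exists>\<gamma>. (\<beta>, \<gamma>) \<in> r \<and> \<beta> \<noteq> \<gamma> \<and> (\<gamma>, \<alpha>) \<in> r \<and> \<gamma> \<noteq> \<alpha>)"

definition has_maximum :: "('i \<times> 'i) set \<Rightarrow> bool" where
  "has_maximum r \<longleftrightarrow> (\<exists>\<alpha>\<in>Field r. \<forall>\<beta>\<in>Field r. (\<beta>, \<alpha>) \<in> r)"

definition good_stratification :: "('a::field \<Rightarrow> 'b::ab_group_add \<Rightarrow> 'b) \<Rightarrow> ('b \<Rightarrow> 'b) \<Rightarrow> ('i \<times> 'i) set \<Rightarrow> ('i \<Rightarrow> 'b set) \<Rightarrow> bool" where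
  "good_stratification scale u r M \<longleftrightarrow>
     stratification scale u r M \<and>
     (\<forall>\<alpha>\<in>Field r. (is_minimum r \<alpha> \<or> (\<exists>\<beta>\<in>Field r. is_successor_of r \<alpha> \<beta>)) \<longrightarrow>
        quotient_dim_ge2 scale (M \<alpha>) (lower_sum scale r M \<alpha>)) \<and>
     \<not> has_maximum r"

end

theory Submission
  imports Defs "HOL-Library.Nat_Bijection"
begin


context vector_space
begin

lemma not_in_span_indep:
  assumes "independent B" "A \<subseteq> B" "x \<in> B" "x \<notin> A"
  shows "x \<notin> span A"
proof
  assume "x \<in> span A"
  then have "x \<in> span (B - {x})" using assms span_mono[of A "B - {x}"] by blast
  then have "dependent B" using assms(3) unfolding dependent_def by blast
  then show False using assms(1) by simp
qed

lemma independent_Un_disj_span: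
  assumes "independent A" "independent B" "span A \<inter> span B \<subseteq> {0}"
  shows "independent (A \<union> B)"
  unfolding independent_explicit_finite_subsets
proof (intro allI impI ballI)
  fix F v and f :: "'b \<Rightarrow> 'a"
  assume F: "F \<subseteq> A \<union> B" "finite F" "(\<Sum>v\<in>F. f v *s v) = 0" "v \<in> F"
  let ?a = "(\<Sum>v\<in>F \<inter> A. f v *s v)" and ?b = "(\<Sum>v\<in>F - A. f v *s v)"
  have split: "(\<Sum>v\<in>F. f v *s v) = ?a + ?b"
    using F(2) by (metis sum.Int_Diff)
  have sa: "?a \<in> span A" by (intro span_sum span_scale span_base) auto
  have sb: "?b \<in> span B" using F(1) by (intro span_sum span_scale span_base) auto
  have ab: "?a = - ?b" using F(3) split by (simp add: eq_neg_iff_add_eq_0)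
  then have "?a \<in> span B" using sb span_neg by simp
  hence a0: "?a = 0" using assms(3) sa by blast
  hence b0: "?b = 0" using ab by simp
  show "f v = 0"
  proof (cases "v \<in> A")
    case True then show ?thesis using independentD[OF assms(1), of "F \<inter> A" f v] a0 F by auto
  next
    case False then show ?thesis using independentD[OF assms(2), of "F - A" f v] b0 F by auto
  qed
qed

lemma independent_countable:
  assumes "countable C" "span C = UNIV" "independent X"
  shows "countable X"
proof -
  have "\<forall>x. \<exists>F. finite F \<and> F \<subseteq> C \<and> x \<in> span F"
  proof
    fix x
    have "x \<in> span C" using assms(2) by simp
    then obtain t r where t: "finite t" "t \<subseteq> C" "x = (\<Sum>a\<in>t. r a *s a)" unfolding span_explicit by blast
    moreover have "(\<Sum>a\<in>t. r a *s a) \<in> span t" by (intro span_sum span_scale span_base)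
    ultimately have "x \<in> span t" by simp
    then show "\<exists>F. finite F \<and> F \<subseteq> C \<and> x \<in> span F" using t by blast
  qed
  then obtain Fx where Fx: "\<And>x. finite (Fx x) \<and> Fx x \<subseteq> C \<and> x \<in> span (Fx x)" by metis
  have "X \<subseteq> (\<Union>F\<in>{F. finite F \<and> F \<subseteq> C}. {x\<in>X. Fx x = F})" using Fx by auto
  moreover have "countable (\<Union>F\<in>{F. finite F \<and> F \<subseteq> C}. {x\<in>X. Fx x = F})"
  proof (rule countable_UN)
    show "countable {F. finite F \<and> F \<subseteq> C}" using countable_Collect_finite_subset assms(1) by blast
    fix F assume F: "F \<in> {F. finite F \<and> F \<subseteq> C}"
    have sub: "{x\<in>X. Fx x = F} \<subseteq> span F" using Fx by auto
    have "finite {x\<in>X. Fx x = F}"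
      using independent_span_bound[OF _ _ sub] independent_mono[OF assms(3)] F by auto
    then show "countable {x\<in>X. Fx x = F}" by (rule countable_finite)
  qed
  ultimately show ?thesis by (rule countable_subset)
qed

lemma decomp:
  fixes w :: "'b \<Rightarrow> 'b"
  assumes hom: "module_hom scale scale w" and ww: "\<And>x. w (w x) = 0"
  obtains S T where "independent (S \<union> w ` S \<union> T)" "span (S \<union> w ` S \<union> T) = UNIV"
    "inj_on w S" "S \<inter> w ` S = {}" "S \<inter> T = {}" "w ` S \<inter> T = {}" "\<And>t. t \<in> T \<Longrightarrow> w t = 0"
    "independent (w ` S)" "span (w ` S) = range w"
proof -
  interpret h: module_hom scale scale w by (rule hom)
  obtain B1 where B1: "B1 \<subseteq> range w" "independent B1" "range w \<subseteq> span B1"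
    using maximal_independent_subset by blast
  have kerS: "subspace {x. w x = 0}" by (rule h.subspace_kernel)
  have B1k: "B1 \<subseteq> {x. w x = 0}" using B1(1) ww by auto
  obtain B2 where B2: "B1 \<subseteq> B2" "B2 \<subseteq> {x. w x = 0}" "independent B2" "{x. w x = 0} \<subseteq> span B2"
    using maximal_independent_subset_extend[OF B1k B1(2)] by blast
  define \<sigma> where "\<sigma> b = (SOME y. w y = b)" for b
  have ws: "w (\<sigma> b) = b" if "b \<in> B1" for b
    using that B1(1) unfolding \<sigma>_def by (metis (mono_tags, lifting) imageE someI_ex subsetD)
  define S where "S = \<sigma> ` B1"
  define T where "T = B2 - B1"
  have wS: "w ` S = B1" unfolding S_def image_image using ws by simp
  have inj: "inj_on w S" unfolding S_def inj_on_def using ws by auto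
  have B10: "0 \<notin> B1" using B1(2) dependent_zero by blast
  have SwS: "S \<inter> w ` S = {}" using wS B1k B10 unfolding S_def using ws by force
  have ST: "S \<inter> T = {}" using B2(2) B10 ws unfolding S_def T_def by force
  have wST: "w ` S \<inter> T = {}" using wS unfolding T_def by auto
  have Tk: "\<And>t. t \<in> T \<Longrightarrow> w t = 0" using B2(2) unfolding T_def by auto
  have spw: "span (w ` S) = range w"
  proof
    have "subspace (range w)" using h.subspace_image[OF subspace_UNIV] .
    then show "span (w ` S) \<subseteq> range w" using wS B1(1) by (simp add: span_minimal)
    show "range w \<subseteq> span (w ` S)" using wS B1(3) by simp
  qed
  have injspan: "inj_on w (span S)"
    using h.inj_on_span_independent_image[of S] wS B1(2) inj by simp
  have indS: "independent S"
  proof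
    assume "dependent S"
    then obtain a where a: "a \<in> S" "a \<in> span (S - {a})" unfolding dependent_def by blast
    then have "w a \<in> w ` span (S - {a})" by blast
    also have "\<dots> = span (w ` (S - {a}))" using h.span_image by simp
    also have "w ` (S - {a}) = w ` S - {w a}" using inj a(1) by (simp add: inj_on_image_set_diff)
    finally have "dependent (w ` S)" unfolding dependent_def using a(1) by blast
    then show False using wS B1(2) by simp
  qed
  have un: "S \<union> w ` S \<union> T = S \<union> B2" using wS B2(1) unfolding T_def by auto
  have ind: "independent (S \<union> B2)"
  proof (rule independent_Un_disj_span[OF indS B2(3)])
    show "span S \<inter> span B2 \<subseteq> {0}"
    proof
      fix x assume x: "x \<in> span S \<inter> span B2"
      have "span B2 \<subseteq> {x. w x = 0}" using B2(2) kerS by (simp add: span_minimal)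
      then have "w x = w 0" using x by auto
      then have "x = 0" using injspan x span_zero by (auto simp: inj_on_def)
      then show "x \<in> {0}" by simp
    qed
  qed
  have spn: "span (S \<union> B2) = UNIV"
  proof (rule set_eqI, rule iffI)
    fix x :: 'b
    have "w x \<in> span (w ` S)" using spw by auto
    then have "w x \<in> w ` span S" using h.span_image by simp
    then obtain y where y: "y \<in> span S" "w y = w x" by auto
    have "w (x - y) = 0" using y h.diff by simp
    then have "x - y \<in> span B2" using B2(4) by auto
    then have "x - y \<in> span (S \<union> B2)" using span_mono[of B2 "S \<union> B2"] by auto
    moreover have "y \<in> span (S \<union> B2)" using y span_mono[of S "S \<union> B2"] by auto
    ultimately have "(x - y) + y \<in> span (S \<union> B2)" by (rule span_add)
    then show "x \<in> span (S \<union> B2)" by simp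
  qed simp
  show ?thesis
    apply (rule that[of S T])
    using un ind spn inj SwS ST wST Tk wS B1(2) spw by auto
qed

end



definition lexle :: "nat \<times> nat \<Rightarrow> nat \<times> nat \<Rightarrow> bool" where
  "lexle p q \<longleftrightarrow> fst p < fst q \<or> (fst p = fst q \<and> snd p \<le> snd q)"
definition lexlt :: "nat \<times> nat \<Rightarrow> nat \<times> nat \<Rightarrow> bool" where
  "lexlt p q \<longleftrightarrow> fst p < fst q \<or> (fst p = fst q \<and> snd p < snd q)"
definition rr :: "(nat \<times> nat) set" where
  "rr = {(m, n). lexle (prod_decode m) (prod_decode n)}"

lemma pd_eq: "prod_decode m = prod_decode n \<longleftrightarrow> m = n"
  by (metis prod_decode_inverse)

lemma rr_strict: "((m, n) \<in> rr \<and> m \<noteq> n) \<longleftrightarrow> lexlt (prod_decode m) (prod_decode n)"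
  unfolding rr_def lexle_def lexlt_def using pd_eq[of m n] by (auto simp: prod_eq_iff)

lemma Field_rr: "Field rr = UNIV"
  unfolding Field_def rr_def lexle_def by auto

lemma Well_order_rr: "Well_order rr"
proof -
  have wf: "wf (rr - Id)"
  proof (rule wf_subset)
    show "wf (inv_image (less_than <*lex*> less_than) prod_decode)"
      by (intro wf_inv_image wf_lex_prod wf_less_than)
    show "rr - Id \<subseteq> inv_image (less_than <*lex*> less_than) prod_decode"
    proof
      fix p assume "p \<in> rr - Id"
      then obtain m n where p: "p = (m, n)" "(m, n) \<in> rr" "m \<noteq> n" by (cases p) auto
      then have "lexlt (prod_decode m) (prod_decode n)" using rr_strict by blast
      then show "p \<in> inv_image (less_than <*lex*> less_than) prod_decode"
        unfolding p lexlt_def by (cases "prod_decode m", cases "prod_decode n") auto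
    qed
  qed
  have lin: "linear_order_on UNIV rr"
    unfolding linear_order_on_def partial_order_on_def preorder_on_def refl_on_def trans_def
      antisym_def total_on_def rr_def lexle_def
    using pd_eq by (auto simp: prod_eq_iff) (metis pd_eq prod_eq_iff)
  show ?thesis unfolding well_order_on_def Field_rr using wf lin by simp
qed

lemma indexing:
  fixes S T :: "'b set"
  assumes "countable S" "infinite S" "countable T" "S \<inter> T = {}"
  obtains g :: "nat \<Rightarrow> 'b" where "inj g" "range g = S \<union> T"
    "\<And>n. g n \<in> T \<Longrightarrow> fst (prod_decode n) \<ge> 1 \<and> snd (prod_decode n) = 0"
proof -
  define pos where "pos t = prod_encode (Suc (to_nat_on T t), 0)" for t
  have injpos: "inj_on pos T"
    unfolding pos_def inj_on_def using inj_on_to_nat_on[OF assms(3)]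
    by (auto simp: inj_on_def prod_encode_eq)
  define R where "R = UNIV - pos ` T"
  have "range (\<lambda>b. prod_encode (0, b)) \<subseteq> R" unfolding R_def pos_def by (auto simp: prod_encode_eq)
  moreover have "infinite (range (\<lambda>b. prod_encode (0, b)))"
    by (rule range_inj_infinite) (auto simp: inj_def prod_encode_eq)
  ultimately have infR: "infinite R" using finite_subset by blast
  define \<rho> where "\<rho> = from_nat_into S \<circ> to_nat_on R"
  have bij\<rho>: "bij_betw \<rho> R S" unfolding \<rho>_def
    by (rule bij_betw_trans[OF to_nat_on_infinite[OF _ infR] bij_betw_from_nat_into[OF assms(1,2)]]) simp
  define g where "g n = (if n \<in> pos ` T then the_inv_into T pos n else \<rho> n)" for n
  have gT: "n \<in> pos ` T \<Longrightarrow> g n \<in> T \<and> pos (g n) = n" for n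
    unfolding g_def using injpos by (auto simp: the_inv_into_f_f)
  have gS: "n \<notin> pos ` T \<Longrightarrow> g n \<in> S \<and> g n = \<rho> n" for n
    unfolding g_def using bij\<rho> R_def by (auto simp: bij_betw_def)
  show ?thesis
  proof (rule that)
    show "inj g"
    proof (rule injI)
      fix m n assume e: "g m = g n"
      show "m = n"
      proof (cases "m \<in> pos ` T"; cases "n \<in> pos ` T")
        assume "m \<notin> pos ` T" "n \<notin> pos ` T"
        then show ?thesis using gS[of m] gS[of n] e bij\<rho> R_def
          by (auto simp: bij_betw_def inj_on_def)
      qed (use gT gS e assms(4) in \<open>metis disjoint_iff\<close>)+
    qed
    show "range g = S \<union> T"
    proof
      show "range g \<subseteq> S \<union> T" using gT gS by blast
      show "S \<union> T \<subseteq> range g"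
      proof
        fix x assume "x \<in> S \<union> T"
        then show "x \<in> range g"
        proof
          assume "x \<in> S"
          then obtain n where "n \<in> R" "\<rho> n = x" using bij\<rho> by (auto simp: bij_betw_def)
          then show ?thesis using gS[of n] R_def by (metis DiffD2 rangeI)
        next
          assume x: "x \<in> T"
          then have "g (pos x) = x" unfolding g_def using injpos by (auto simp: the_inv_into_f_f)
          then show ?thesis by (metis rangeI)
        qed
      qed
    qed
    fix n assume "g n \<in> T"
    then have "n \<in> pos ` T" using gS assms(4) by blast
    then show "fst (prod_decode n) \<ge> 1 \<and> snd (prod_decode n) = 0"
      unfolding pos_def by auto
  qed
qed



lemma lex_facts:
  "lexle p p"
  "lexle a b \<Longrightarrow> lexle b c \<Longrightarrow> lexle a c"
  "lexle a b \<Longrightarrow> lexlt b c \<Longrightarrow> lexlt a c"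
  "lexle a b \<longleftrightarrow> lexlt a b \<or> a = b"
  "\<not> lexlt a a"
  unfolding lexle_def lexlt_def by (auto simp: prod_eq_iff)

context vector_space
begin

lemma strat_core:
  fixes w u :: "'b \<Rightarrow> 'b" and g :: "nat \<Rightarrow> 'b"
  assumes hom: "module_hom scale scale w"
    and uw: "\<And>x. u x = w x + scale c x"
    and ww: "\<And>x. w (w x) = 0"
    and ind: "independent (S \<union> w ` S \<union> T)" and spn: "span (S \<union> w ` S \<union> T) = UNIV"
    and inj: "inj_on w S" and d1: "S \<inter> w ` S = {}" and d2: "S \<inter> T = {}" and d3: "w ` S \<inter> T = {}"
    and Tk: "\<And>t. t \<in> T \<Longrightarrow> w t = 0"
    and ginj: "inj g" and grange: "range g = S \<union> T"
    and glim: "\<And>n. g n \<in> T \<Longrightarrow> fst (prod_decode n) \<ge> 1 \<and> snd (prod_decode n) = 0"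
  shows "good_stratification scale u rr
     (\<lambda>n. span (g ` {m. lexle (prod_decode m) (prod_decode n)} \<union> w ` g ` {m. lexle (prod_decode m) (prod_decode n)}))"
proof -
  interpret h: module_hom scale scale w by (rule hom)
  define H where "H X = g ` X \<union> w ` g ` X" for X
  define D where "D n = {m. lexle (prod_decode m) (prod_decode n)}" for n
  define Dl where "Dl n = {m. lexlt (prod_decode m) (prod_decode n)}" for n
  define M where "M n = span (H (D n))" for n
  have Meq: "(\<lambda>n. span (g ` {m. lexle (prod_decode m) (prod_decode n)} \<union> w ` g ` {m. lexle (prod_decode m) (prod_decode n)})) = M"
    unfolding M_def H_def D_def by simp
  let ?F = "S \<union> w ` S \<union> T"
  have F0: "0 \<notin> ?F"
  proof
    assume "0 \<in> ?F"
    then have "dependent ?F" by (rule dependent_zero)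
    with ind show False by simp
  qed
  have gF: "g n \<in> S \<union> T" for n
  proof -
    have "g n \<in> range g" by simp
    then show ?thesis unfolding grange .
  qed
  have HF: "H X - {0} \<subseteq> ?F" for X
  proof
    fix x assume "x \<in> H X - {0}"
    then obtain m where m: "x = g m \<or> x = w (g m)" "x \<noteq> 0" unfolding H_def by auto
    show "x \<in> ?F"
    proof (cases "x = g m")
      case True then show ?thesis using gF[of m] by blast
    next
      case False
      then have x: "x = w (g m)" using m by blast
      have "g m \<notin> T" using Tk[of "g m"] x m(2) by metis
      then have "g m \<in> S" using gF[of m] by blast
      then show ?thesis using x by blast
    qed
  qed
  have notin1: "g n \<notin> span (H X)" if "n \<notin> X" for n X
  proof -
    have "g n \<notin> H X - {0}"
    proof
      assume "g n \<in> H X - {0}"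
      then obtain m where m: "m \<in> X" "g n = g m \<or> g n = w (g m)" unfolding H_def by auto
      show False
      proof (cases "g n = g m")
        case True then show False using ginj m that by (metis injD)
      next
        case False
        then have e: "g n = w (g m)" using m by simp
        show False using gF[of m]
        proof
          assume "g m \<in> S"
          then have "g n \<in> w ` S" using e by blast
          then show False using gF[of n] d1 d3 by blast
        next
          assume "g m \<in> T"
          then have "g n = 0" using e Tk by simp
          then show False using gF[of n] F0 by simp
        qed
      qed
    qed
    moreover have gnF: "g n \<in> ?F" using gF[of n] by blast
    ultimately have "g n \<notin> span (H X - {0})"
      by (intro not_in_span_indep[OF ind HF gnF])
    then show ?thesis by simp
  qed
  have notin2: "w (g n) \<notin> span (H X)" if "n \<notin> X" "g n \<in> S" for n X
  proof -
    have wF: "w (g n) \<in> ?F" using that(2) by simp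
    have "w (g n) \<notin> H X - {0}"
    proof
      assume "w (g n) \<in> H X - {0}"
      then obtain m where m: "m \<in> X" "w (g n) = g m \<or> w (g n) = w (g m)" unfolding H_def by auto
      show False
      proof (cases "w (g n) = g m")
        case True
        have "w (g n) \<in> w ` S" using that(2) by (rule imageI)
        then have gmw: "g m \<in> w ` S" using True by simp
        show False using gF[of m]
        proof
          assume "g m \<in> S" then show False using gmw d1 by (metis IntI empty_iff)
        next
          assume "g m \<in> T" then show False using gmw d3 by (metis IntI empty_iff)
        qed
      next
        case False
        then have e: "w (g n) = w (g m)" using m by simp
        show False using gF[of m]
        proof
          assume gm: "g m \<in> S"
          have "g n = g m" using inj_onD[OF inj e that(2) gm] .
          then have "n = m" using injD[OF ginj] by blast
          then show False using m(1) that(1) by simp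
        next
          assume "g m \<in> T"
          then have "w (g n) = 0" using e Tk by simp
          then show False using wF F0 by simp
        qed
      qed
    qed
    then have "w (g n) \<notin> span (H X - {0})"
      by (intro not_in_span_indep[OF ind HF wF])
    then show ?thesis by simp
  qed
  have wstab: "w x \<in> span (H X)" if "x \<in> span (H X)" for x X
  proof -
    have "w ` H X \<subseteq> span (H X)"
      unfolding H_def using ww by (auto intro: span_base span_zero)
    then have "span (w ` H X) \<subseteq> span (H X)" by (simp add: span_minimal)
    then show ?thesis using that h.span_image by auto
  qed
  have ustab: "u x \<in> span (H X)" if "x \<in> span (H X)" for x X
    unfolding uw using wstab[OF that] that by (intro span_add span_scale)
  have upow: "(u ^^ k) x \<in> span (H X)" if "x \<in> span (H X)" for x X k
    by (induction k) (simp_all add: that ustab)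
  have Dins: "D n = insert n (Dl n)" for n
    unfolding D_def Dl_def using lex_facts(4) pd_eq by auto
  have HD: "H (D n) = insert (g n) (insert (w (g n)) (H (Dl n)))" for n
    unfolding Dins H_def by auto
  have nDl: "n \<notin> Dl n" for n unfolding Dl_def using lex_facts(5) by simp
  have DlD: "Dl n \<subseteq> D n" for n unfolding Dins by auto
  have lower: "{\<beta>. (\<beta>, n) \<in> rr \<and> \<beta> \<noteq> n} = Dl n" for n
    unfolding Dl_def using rr_strict by auto
  have LS: "lower_sum scale rr M n = span (H (Dl n))" for n
  proof -
    have "span (\<Union>\<beta>\<in>Dl n. M \<beta>) = span (H (Dl n))"
    proof (subst span_eq, rule conjI)
      show "(\<Union>\<beta>\<in>Dl n. M \<beta>) \<subseteq> span (H (Dl n))"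
      proof (rule UN_least)
        fix \<beta> assume "\<beta> \<in> Dl n"
        then have "D \<beta> \<subseteq> Dl n" unfolding D_def Dl_def using lex_facts(3) by blast
        then have "H (D \<beta>) \<subseteq> H (Dl n)" unfolding H_def by auto
        then show "M \<beta> \<subseteq> span (H (Dl n))" unfolding M_def by (rule span_mono)
      qed
      show "H (Dl n) \<subseteq> span (\<Union>\<beta>\<in>Dl n. M \<beta>)"
      proof
        fix x assume "x \<in> H (Dl n)"
        then obtain m where m: "m \<in> Dl n" "x \<in> H (D m)" unfolding H_def Dins by auto
        then have "x \<in> M m" unfolding M_def using span_superset by blast
        then show "x \<in> span (\<Union>\<beta>\<in>Dl n. M \<beta>)" using m(1) by (auto intro: span_base)
      qed
    qed
    then show ?thesis unfolding lower_sum_def lower by simp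
  qed
  have gM: "g n \<in> M n" "w (g n) \<in> M n" for n unfolding M_def HD by (auto intro: span_base)
  have gnS: "g n \<in> S" if "\<not> (fst (prod_decode n) \<ge> 1 \<and> snd (prod_decode n) = 0)" for n
    using glim[of n] gF[of n] that by blast
  have dim2: "quotient_dim_ge2 scale (M n) (lower_sum scale rr M n)" if "g n \<in> S" for n
    unfolding quotient_dim_ge2_def LS
  proof (intro bexI allI impI)
    fix a b
    assume z: "scale a (g n) + scale b (w (g n)) \<in> span (H (Dl n))"
    have "w (scale a (g n) + scale b (w (g n))) = scale a (w (g n))"
      using ww by (simp add: h.add h.scale)
    then have az: "scale a (w (g n)) \<in> span (H (Dl n))" using wstab[OF z] by simp
    have a0: "a = 0"
    proof (rule ccontr)
      assume "a \<noteq> 0"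
      then have "scale (inverse a) (scale a (w (g n))) = w (g n)" by simp
      then have "w (g n) \<in> span (H (Dl n))" using span_scale[OF az, of "inverse a"] by simp
      then show False using notin2[OF nDl that] by simp
    qed
    then have bz: "scale b (w (g n)) \<in> span (H (Dl n))" using z by simp
    have "b = 0"
    proof (rule ccontr)
      assume "b \<noteq> 0"
      then have "scale (inverse b) (scale b (w (g n))) = w (g n)" by simp
      then have "w (g n) \<in> span (H (Dl n))" using span_scale[OF bz, of "inverse b"] by simp
      then show False using notin2[OF nDl that] by simp
    qed
    then show "a = 0 \<and> b = 0" using a0 by simp
  qed (use gM in auto)
  have strat: "stratification scale u rr M"
    unfolding stratification_def Field_rr
  proof (intro conjI ballI impI)
    show "well_order_on UNIV rr" using Well_order_rr Field_rr by simp
    show "UNIV \<noteq> {}" by simp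
    fix \<alpha> assume "\<alpha> \<in> (UNIV :: nat set)"
    show "submodule scale u (M \<alpha>)"
      unfolding submodule_def M_def using ustab by auto
    show "nonzero_cyclic_quotient scale u (M \<alpha>) (lower_sum scale rr M \<alpha>)"
      unfolding nonzero_cyclic_quotient_def LS
    proof (intro conjI bexI)
      show "\<not> M \<alpha> \<subseteq> span (H (Dl \<alpha>))" using gM(1)[of \<alpha>] notin1[OF nDl] by blast
      show "g \<alpha> \<in> M \<alpha>" by (rule gM)
      let ?O = "span (H (Dl \<alpha>)) \<union> range (\<lambda>k. (u ^^ k) (g \<alpha>))"
      show "M \<alpha> = span ?O"
      proof
        have "H (D \<alpha>) \<subseteq> span ?O"
        proof -
          have 1: "g \<alpha> \<in> span ?O" by (rule span_base) (auto intro: range_eqI[of _ _ 0])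
          have "u (g \<alpha>) \<in> span ?O" by (rule span_base) (auto intro: range_eqI[of _ _ 1])
          then have "u (g \<alpha>) - scale c (g \<alpha>) \<in> span ?O" using 1 by (intro span_diff span_scale)
          then have 2: "w (g \<alpha>) \<in> span ?O" using uw[of "g \<alpha>"] by simp
          have 3: "H (Dl \<alpha>) \<subseteq> span ?O"
          proof -
            have "H (Dl \<alpha>) \<subseteq> span (H (Dl \<alpha>))" by (rule span_superset)
            also have "\<dots> \<subseteq> ?O" by blast
            also have "?O \<subseteq> span ?O" by (rule span_superset)
            finally show ?thesis .
          qed
          show ?thesis unfolding HD using 1 2 3 by blast
        qed
        then show "M \<alpha> \<subseteq> span ?O" unfolding M_def by (simp add: span_minimal)
        have "H (Dl \<alpha>) \<subseteq> H (D \<alpha>)" using DlD[of \<alpha>] unfolding H_def by auto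
        then have o1: "span (H (Dl \<alpha>)) \<subseteq> M \<alpha>" unfolding M_def by (rule span_mono)
        have o2: "range (\<lambda>k. (u ^^ k) (g \<alpha>)) \<subseteq> M \<alpha>"
          using upow[OF gM(1)[unfolded M_def]] unfolding M_def by auto
        have "?O \<subseteq> M \<alpha>" using o1 o2 by (rule Un_least)
        then show "span ?O \<subseteq> M \<alpha>" unfolding M_def by (simp add: span_minimal)
      qed
    qed
    fix \<beta> assume "\<beta> \<in> (UNIV :: nat set)" "(\<beta>, \<alpha>) \<in> rr"
    then have "D \<beta> \<subseteq> D \<alpha>" unfolding D_def rr_def using lex_facts(2) by blast
    then have "H (D \<beta>) \<subseteq> H (D \<alpha>)" unfolding H_def by auto
    then show "M \<beta> \<subseteq> M \<alpha>" unfolding M_def by (rule span_mono)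
  next
    have "?F \<subseteq> (\<Union>\<alpha>\<in>UNIV. M \<alpha>)"
    proof
      fix x assume "x \<in> ?F"
      then consider "x \<in> S \<union> T" | "x \<in> w ` S" by blast
      then show "x \<in> (\<Union>\<alpha>\<in>UNIV. M \<alpha>)"
      proof cases
        case 1 then obtain m where "x = g m" using grange by (metis rangeE)
        then show ?thesis using gM by blast
      next
        case 2 then obtain s where "s \<in> S" "x = w s" by blast
        then obtain m where "x = w (g m)" using grange by (metis UnI1 rangeE)
        then show ?thesis using gM by blast
      qed
    qed
    then have "span ?F \<subseteq> span (\<Union>\<alpha>\<in>UNIV. M \<alpha>)" by (rule span_mono)
    then show "span (\<Union>\<alpha>\<in>UNIV. M \<alpha>) = UNIV" using spn by auto
  qed
  have good: "good_stratification scale u rr M"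
    unfolding good_stratification_def Field_rr
  proof (intro conjI ballI impI)
    show "stratification scale u rr M" by (rule strat)
    fix \<alpha> assume "\<alpha> \<in> (UNIV :: nat set)" and ms: "is_minimum rr \<alpha> \<or> (\<exists>\<beta>\<in>UNIV. is_successor_of rr \<alpha> \<beta>)"
    have "g \<alpha> \<in> S"
    proof (rule gnS, rule notI)
      assume lim: "fst (prod_decode \<alpha>) \<ge> 1 \<and> snd (prod_decode \<alpha>) = 0"
      from ms show False
      proof
        assume "is_minimum rr \<alpha>"
        then have "(\<alpha>, prod_encode (0, 0)) \<in> rr" unfolding is_minimum_def Field_rr by blast
        then show False using lim unfolding rr_def lexle_def by simp
      next
        assume "\<exists>\<beta>\<in>UNIV. is_successor_of rr \<alpha> \<beta>"
        then obtain \<beta> where b: "(\<beta>, \<alpha>) \<in> rr" "\<beta> \<noteq> \<alpha>"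
          and nb: "\<not> (\<exists>\<gamma>. (\<beta>, \<gamma>) \<in> rr \<and> \<beta> \<noteq> \<gamma> \<and> (\<gamma>, \<alpha>) \<in> rr \<and> \<gamma> \<noteq> \<alpha>)"
          unfolding is_successor_of_def by blast
        have lt: "lexlt (prod_decode \<beta>) (prod_decode \<alpha>)" using b rr_strict by blast
        define \<gamma> where "\<gamma> = prod_encode (fst (prod_decode \<beta>), Suc (snd (prod_decode \<beta>)))"
        have "lexlt (prod_decode \<beta>) (prod_decode \<gamma>)" unfolding \<gamma>_def lexlt_def by simp
        moreover have "lexlt (prod_decode \<gamma>) (prod_decode \<alpha>)"
          using lt lim unfolding \<gamma>_def lexlt_def by auto
        ultimately show False using nb rr_strict by blast
      qed
    qed
    then show "quotient_dim_ge2 scale (M \<alpha>) (lower_sum scale rr M \<alpha>)" by (rule dim2)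
  next
    show "\<not> has_maximum rr"
    proof
      assume "has_maximum rr"
      then obtain \<alpha> where a: "\<forall>\<beta>. (\<beta>, \<alpha>) \<in> rr" unfolding has_maximum_def Field_rr by blast
      have "(prod_encode (fst (prod_decode \<alpha>), Suc (snd (prod_decode \<alpha>))), \<alpha>) \<in> rr" using a by blast
      then show False unfolding rr_def lexle_def by simp
    qed
  qed
  show ?thesis unfolding Meq by (rule good)
qed

end



theorem lemma5:
  fixes scale :: "'a::field \<Rightarrow> 'b::ab_group_add \<Rightarrow> 'b"
    and u :: "'b \<Rightarrow> 'b" and c :: 'a
  assumes "vector_space scale"
    and "countably_infinite_dim scale"
    and "Vector_Spaces.linear scale scale u"
    and "\<forall>\<mu>. \<not> dominant_eigenvalue scale u \<mu>"
    and "\<forall>x. (\<lambda>y. u y - scale c y) (u x - scale c x) = 0"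
  shows "\<exists>(r :: (nat \<times> nat) set) (M :: nat \<Rightarrow> 'b set). good_stratification scale u r M"
proof -
  interpret vector_space scale by (rule assms(1))
  define w where "w x = u x - scale c x" for x
  have homu: "module_hom scale scale u" using assms(3) module_hom_iff_linear by blast
  have m: "module scale" using assms(1) module_iff_vector_space by blast
  have ua: "u (x + y) = u x + u y" "u (scale a x) = scale a (u x)" for x y a
    using homu by (simp_all add: module_hom_iff)
  have homw: "module_hom scale scale w"
    unfolding module_hom_iff w_def using m ua
    by (simp add: scale_right_distrib scale_right_diff_distrib scale_left_commute algebra_simps)
  have ww: "w (w x) = 0" for x using assms(5) unfolding w_def by simp
  have uw: "u x = w x + scale c x" for x unfolding w_def by simp
  obtain S T where ST: "independent (S \<union> w ` S \<union> T)" "span (S \<union> w ` S \<union> T) = UNIV"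
    "inj_on w S" "S \<inter> w ` S = {}" "S \<inter> T = {}" "w ` S \<inter> T = {}" "\<And>t. t \<in> T \<Longrightarrow> w t = 0"
    "independent (w ` S)" "span (w ` S) = range w"
    using decomp[OF homw ww] by blast
  obtain C where C: "is_basis scale C" "infinite C" "countable C"
    using assms(2) unfolding countably_infinite_dim_def by blast
  have spC: "span C = UNIV" using C(1) unfolding is_basis_def by simp
  have infw: "infinite (w ` S)"
  proof
    assume fin: "finite (w ` S)"
    have "rank_less_dim scale w"
      unfolding rank_less_dim_def
    proof (intro exI conjI)
      show "independent (w ` S)" by (rule ST(8))
      show "span (w ` S) = range w" by (rule ST(9))
      show "is_basis scale C" by (rule C(1))
      show "(card_of (w ` S), card_of C) \<in> ordLess"
        using finite_ordLess_infinite[OF card_of_Well_order card_of_Well_order] fin C(2)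
        by (simp add: Field_card_of)
    qed
    then show False using assms(4) unfolding dominant_eigenvalue_def w_def[abs_def] by blast
  qed
  have infS: "infinite S" using infw by blast
  have cST: "countable (S \<union> T)"
    using independent_countable[OF C(3) spC independent_mono[OF ST(1)]] by blast
  obtain g :: "nat \<Rightarrow> 'b" where g: "inj g" "range g = S \<union> T"
    "\<And>n. g n \<in> T \<Longrightarrow> fst (prod_decode n) \<ge> 1 \<and> snd (prod_decode n) = 0"
    using indexing[of S T] cST infS ST(5) by (metis countable_Un_iff)
  have "good_stratification scale u rr
     (\<lambda>n. span (g ` {m. lexle (prod_decode m) (prod_decode n)} \<union> w ` g ` {m. lexle (prod_decode m) (prod_decode n)}))"
    by (rule strat_core[OF homw uw ww ST(1-7) g])
  then show ?thesis by blast
qed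


end
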